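(* Let $k\geq1$ and $n\geq 2k$. Let $\mathcal{S}$ be an antichain of $\mathcal{F}=\mathcal{F}_{2k}^{[1,n]}$ that contains the set $[1,2]\cup[n-2k+3,n]$. Then $B_{\mathcal{S}}$ has exactly $\binom{n-k-1}{k-1}$ facets. Equivalently, in the poset $\mathcal{P}=\{(x_1,\dots,x_k): 1\leq x_1<\dots<x_k\leq n-k\}\subseteq\mathbb{N}^k$ (ordered componentwise), if $\mathcal{A}$ is an antichain containing $G=(1,n-2k+2,n-2k+3,\dots,n-k)$, then $|\mathcal{P}(\mathcal{A})\setminus\mathcal{P}(\mathcal{A}-\mathbf{1}_k)|=|\mathcal{P}(\{G\})|=\binom{n-k-1}{k-1}$.
   Context: Notation: $[m,n]=\{m,\dots,n\}$; $2k$-subsets of $[n]$ are identified with increasing vectors, and $\leq_p$ is the componentwise order. $\mathcal{F}_{2k}^{[1,n]}$ is the set of sets $\{i_1,i_1+1,\dots,i_k,i_k+1\}$ with $1\leq i_1$, $i_k\leq n-1$, $i_j\leq i_{j+1}-2$, ordered by $\leq_p$. $\mathcal{F}(\mathcal{S})$ is the order ideal generated by an antichain $\mathcal{S}$, $B(\mathcal{S})$ the pure complex whose facets are the sets of $\mathcal{F}(\mathcal{S})$, $\mathcal{S}-\mathbf{1}_{2k}=\{x-\mathbf{1}_{2k}: x\in\mathcal{S},\min x>1\}$, and $B_{\mathcal{S}}$ is the complex generated by the facets of $B(\mathcal{S})$ that are not facets of $B(\mathcal{S}-\mathbf{1}_{2k})$. Similarly, for an antichain $\mathcal{A}$ of $\mathcal{P}$,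 $\mathcal{P}(\mathcal{A})$ is the order ideal it generates and $\mathcal{A}-\mathbf{1}_k=\{x-\mathbf{1}_k: x\in\mathcal{A}, x_1>1\}$. The two formulations correspond under the poset isomorphism $R:\mathcal{P}\to\mathcal{F}$, $(x_1,\dots,x_k)\mapsto\{x_1,x_1+1,x_2+1,x_2+2,\dots,x_k+k-1,x_k+k\}$. *)

theory Defs
  imports Main
begin

definition leq_p :: "nat set \<Rightarrow> nat set \<Rightarrow> bool" where
  "leq_p A B \<longleftrightarrow> card A = card B \<and>
     (\<forall>j < card A. sorted_list_of_set A ! j \<le> sorted_list_of_set B ! j)"

text \<open>The family F_{2k}^{[1,n]}: unions of k pairwise separated dominoes {i_j, i_j+1}.\<close>
definition Ffam :: "nat \<Rightarrow> nat \<Rightarrow> nat set set" where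
  "Ffam k n = {(\<Union>j<k. {i j, i j + 1}) | i :: nat \<Rightarrow> nat.
      (\<forall>j<k. 1 \<le> i j \<and> i j \<le> n - 1) \<and> (\<forall>j. j + 1 < k \<longrightarrow> i j + 2 \<le> i (j + 1))}"

definition F_antichain :: "nat \<Rightarrow> nat \<Rightarrow> nat set set \<Rightarrow> bool" where
  "F_antichain k n S \<longleftrightarrow> S \<subseteq> Ffam k n \<and>
     (\<forall>A\<in>S. \<forall>B\<in>S. leq_p A B \<longrightarrow> A = B)"

definition F_ideal :: "nat \<Rightarrow> nat \<Rightarrow> nat set set \<Rightarrow> nat set set" where
  "F_ideal k n S = {A \<in> Ffam k n. \<exists>B\<in>S. leq_p A B}"

definition F_shift :: "nat set set \<Rightarrow> nat set set" where
  "F_shift S = {(\<lambda>x. x - 1) ` A | A. A \<in> S \<and> Min A > 1}"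

definition gen_complex :: "nat set set \<Rightarrow> nat set set" where
  "gen_complex G = {\<sigma>. \<exists>A\<in>G. \<sigma> \<subseteq> A}"

definition facets :: "nat set set \<Rightarrow> nat set set" where
  "facets K = {\<sigma> \<in> K. \<forall>\<tau>\<in>K. \<sigma> \<subseteq> \<tau> \<longrightarrow> \<tau> = \<sigma>}"

definition B_cx :: "nat \<Rightarrow> nat \<Rightarrow> nat set set \<Rightarrow> nat set set" where
  "B_cx k n S = gen_complex (F_ideal k n S)"

definition B_sub :: "nat \<Rightarrow> nat \<Rightarrow> nat set set \<Rightarrow> nat set set" where
  "B_sub k n S = gen_complex
     {A \<in> facets (B_cx k n S). A \<notin> facets (B_cx k n (F_shift S))}"

definition Pposet :: "nat \<Rightarrow> nat \<Rightarrow> nat list set" where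
  "Pposet k n = {xs. length xs = k \<and> sorted_wrt (<) xs \<and> (\<forall>x\<in>set xs. 1 \<le> x \<and> x \<le> n - k)}"

definition leq_P :: "nat list \<Rightarrow> nat list \<Rightarrow> bool" where
  "leq_P xs ys \<longleftrightarrow> list_all2 (\<le>) xs ys"

definition P_antichain :: "nat \<Rightarrow> nat \<Rightarrow> nat list set \<Rightarrow> bool" where
  "P_antichain k n A \<longleftrightarrow> A \<subseteq> Pposet k n \<and>
     (\<forall>x\<in>A. \<forall>y\<in>A. leq_P x y \<longrightarrow> x = y)"

definition P_ideal :: "nat \<Rightarrow> nat \<Rightarrow> nat list set \<Rightarrow> nat list set" where
  "P_ideal k n A = {x \<in> Pposet k n. \<exists>a\<in>A. leq_P x a}"

definition P_shift :: "nat list set \<Rightarrow> nat list set" where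
  "P_shift A = {map (\<lambda>x. x - 1) a | a. a \<in> A \<and> a \<noteq> [] \<and> hd a > 1}"

definition Gvec :: "nat \<Rightarrow> nat \<Rightarrow> nat list" where
  "Gvec k n = 1 # [n - 2*k + 2 ..< n - k + 1]"

end

theory Submission
  imports Defs
begin


lemma P_fin: "finite (Pposet k n)"
proof -
  have "Pposet k n \<subseteq> {xs. set xs \<subseteq> {1..n-k} \<and> length xs = k}"
    unfolding Pposet_def by auto
  moreover have "finite {xs. set xs \<subseteq> {1..n-k} \<and> length xs = k}"
    by (rule finite_lists_length_eq) simp
  ultimately show ?thesis by (rule finite_subset)
qed

lemma sorted_gap: "sorted_wrt (<) xs \<Longrightarrow> i \<le> j \<Longrightarrow> j < length xs \<Longrightarrow> xs!i + (j - i) \<le> xs!j"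
proof (induction j)
  case 0 then show ?case by simp
next
  case (Suc j)
  show ?case
  proof (cases "i = Suc j")
    case True then show ?thesis by simp
  next
    case False
    then have "i \<le> j" using Suc by simp
    then have "xs!i + (j - i) \<le> xs!j" using Suc by simp
    moreover have "xs!j < xs!Suc j" using Suc.prems by (simp add: sorted_wrt_iff_nth_less)
    ultimately show ?thesis using \<open>i \<le> j\<close> by linarith
  qed
qed

lemma Pmem: "xs \<in> Pposet k n \<longleftrightarrow> length xs = k \<and> (\<forall>i j. i < j \<longrightarrow> j < k \<longrightarrow> xs!i < xs!j)
   \<and> (\<forall>i<k. 1 \<le> xs!i \<and> xs!i \<le> n - k)"
  unfolding Pposet_def sorted_wrt_iff_nth_less by (auto simp: all_set_conv_all_nth)

lemma leqP_nth: "leq_P xs ys \<longleftrightarrow> length xs = length ys \<and> (\<forall>i<length xs. xs!i \<le> ys!i)"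
  unfolding leq_P_def list_all2_conv_all_nth by auto

lemma shift_iff:
  assumes A: "A \<subseteq> Pposet k n" and x: "x \<in> Pposet k n" and k: "k \<ge> 1"
  shows "x \<in> P_ideal k n (P_shift A) \<longleftrightarrow> map Suc x \<in> P_ideal k n A"
proof
  assume "x \<in> P_ideal k n (P_shift A)"
  then obtain a where a: "a \<in> A" "hd a > 1" "leq_P x (map (\<lambda>t. t - 1) a)"
    unfolding P_ideal_def P_shift_def by auto
  have aP: "a \<in> Pposet k n" using a A by auto
  have le: "\<And>i. i < k \<Longrightarrow> Suc (x!i) \<le> a!i"
    using a(3) aP x unfolding leqP_nth Pmem by fastforce
  have "map Suc x \<in> Pposet k n" using x aP le unfolding Pmem by (auto, fastforce)
  moreover have "leq_P (map Suc x) a" using le x aP unfolding leqP_nth Pmem by auto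
  ultimately show "map Suc x \<in> P_ideal k n A" using a unfolding P_ideal_def by auto
next
  assume "map Suc x \<in> P_ideal k n A"
  then obtain a where a: "a \<in> A" "leq_P (map Suc x) a"
    unfolding P_ideal_def by auto
  have aP: "a \<in> Pposet k n" using a A by auto
  have le: "\<And>i. i < k \<Longrightarrow> Suc (x!i) \<le> a!i"
    using a(2) aP x unfolding leqP_nth Pmem by fastforce
  have ne: "a \<noteq> []" using aP k unfolding Pmem by auto
  have "1 \<le> x!0" using x k unfolding Pmem by auto
  then have "hd a > 1" using le[of 0] k ne by (auto simp: hd_conv_nth)
  then have sh: "map (\<lambda>t. t - 1) a \<in> P_shift A" using a ne unfolding P_shift_def by auto
  have le2: "\<And>i. i < k \<Longrightarrow> x!i \<le> a!i - 1" using le by (metis add_diff_cancel_right' diff_le_mono plus_1_eq_Suc add.commute)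
  moreover have "leq_P x (map (\<lambda>t. t - 1) a)" using le2 x aP unfolding leqP_nth Pmem by auto
  ultimately show "x \<in> P_ideal k n (P_shift A)" using x sh unfolding P_ideal_def by auto
qed

lemma sls_set: "sorted_wrt (<) l \<Longrightarrow> sorted_list_of_set (set l) = l"
  by (simp add: strict_sorted_iff sorted_list_of_set.idem_if_sorted_distinct)

lemma Gvec_eq: assumes "n \<ge> 2*k" "k \<ge> 1" shows "Gvec k n = 1 # [n-2*k+2 ..< (n-2*k+2)+(k-1)]"
proof -
  have h: "n - k + 1 = (n-2*k+2)+(k-1)" using assms by arith
  show ?thesis unfolding Gvec_def h ..
qed

lemma Gvec_len: "n \<ge> 2*k \<Longrightarrow> k \<ge> 1 \<Longrightarrow> length (Gvec k n) = k"
  by (simp add: Gvec_eq del: upt_Suc)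

lemma Gvec_nth: "n \<ge> 2*k \<Longrightarrow> k \<ge> 1 \<Longrightarrow> 0 < i \<Longrightarrow> i < k \<Longrightarrow> Gvec k n ! i = n - 2*k + 1 + i"
proof -
  assume a: "n \<ge> 2*k" "k \<ge> 1" "0 < i" "i < k"
  then obtain j where j: "i = Suc j" by (cases i) auto
  have "Gvec k n ! i = [n-2*k+2 ..< (n-2*k+2)+(k-1)] ! j" using a j by (simp add: Gvec_eq del: upt_Suc)
  also have "\<dots> = n-2*k+2 + j" using a j by (subst nth_upt) auto
  finally show ?thesis using j by simp
qed

lemma Gvec_nth0: "Gvec k n ! 0 = 1"
  unfolding Gvec_def by simp

lemma Gvec_P: "n \<ge> 2*k \<Longrightarrow> k \<ge> 1 \<Longrightarrow> Gvec k n \<in> Pposet k n"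
proof -
  assume a: "n \<ge> 2*k" "k \<ge> 1"
  have "Gvec k n ! i < Gvec k n ! j" if "i < j" "j < k" for i j
    using that Gvec_nth[OF a, of i] Gvec_nth[OF a, of j] Gvec_nth0[of k n] a
    by (cases "i = 0") auto
  moreover have "1 \<le> Gvec k n ! i \<and> Gvec k n ! i \<le> n - k" if "i < k" for i
    using that Gvec_nth[OF a, of i] Gvec_nth0[of k n] a
    by (cases "i = 0") auto
  ultimately show ?thesis unfolding Pmem using Gvec_len[OF a] by auto
qed

lemma hd1_le_G:
  assumes y: "y \<in> Pposet k n" and h: "y!0 = 1" and k: "k \<ge> 1" and n: "n \<ge> 2*k"
  shows "leq_P y (Gvec k n)"
proof -
  have len: "length y = k" using y unfolding Pmem by auto
  have sw: "sorted_wrt (<) y" using y unfolding Pposet_def by auto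
  have "y!i \<le> Gvec k n ! i" if i: "i < k" for i
  proof (cases "i = 0")
    case True then show ?thesis using h by (simp add: Gvec_nth0)
  next
    case False
    have "y!i + (k - 1 - i) \<le> y!(k-1)" using sorted_gap[OF sw, of i "k-1"] i len by simp
    moreover have "y!(k-1) \<le> n - k" using y k unfolding Pmem by auto
    ultimately show ?thesis using Gvec_nth[OF n k, of i] False i by linarith
  qed
  then show ?thesis unfolding leqP_nth using len Gvec_len[OF n k] by auto
qed

lemma G_ideal: assumes k: "k \<ge> 1" and n: "n \<ge> 2*k"
  shows "P_ideal k n {Gvec k n} = {y \<in> Pposet k n. y!0 = 1}"
proof -
  have "y!0 = 1" if "y \<in> Pposet k n" "leq_P y (Gvec k n)" for y
    using that k unfolding leqP_nth Pmem by (metis Gvec_nth0 le_antisym less_le_trans zero_less_one)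
  then show ?thesis using hd1_le_G[OF _ _ k n] unfolding P_ideal_def by auto
qed

lemma card_hd1: assumes k: "k \<ge> 1" and n: "n \<ge> 2*k"
  shows "card {y \<in> Pposet k n. y!0 = 1} = (n - k - 1) choose (k - 1)"
proof -
  let ?X = "{y \<in> Pposet k n. y!0 = 1}"
  let ?Y = "{T. T \<subseteq> {2..n-k} \<and> card T = k - 1}"
  have "bij_betw (\<lambda>y. set (tl y)) ?X ?Y"
  proof (rule bij_betw_byWitness[where f' = "\<lambda>T. 1 # sorted_list_of_set T"])
    show "\<forall>a\<in>?X. 1 # sorted_list_of_set (set (tl a)) = a"
    proof
      fix a assume a: "a \<in> ?X"
      then have "a \<noteq> []" using k unfolding Pmem by auto
      then have "a = hd a # tl a" by simp
      moreover have "sorted_wrt (<) (tl a)" using a unfolding Pposet_def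
        by (cases a) auto
      moreover have "hd a = 1" using a \<open>a \<noteq> []\<close> by (simp add: hd_conv_nth)
      ultimately show "1 # sorted_list_of_set (set (tl a)) = a" using sls_set by metis
    qed
    show "\<forall>a'\<in>?Y. set (tl (1 # sorted_list_of_set a')) = a'"
    proof
      fix T assume "T \<in> ?Y"
      then have "finite T" using finite_subset by blast
      then show "set (tl (1 # sorted_list_of_set T)) = T" by simp
    qed
    show "(\<lambda>y. set (tl y)) ` ?X \<subseteq> ?Y"
    proof
      fix T assume "T \<in> (\<lambda>y. set (tl y)) ` ?X"
      then obtain a where a: "a \<in> ?X" "T = set (tl a)" by auto
      have len: "length a = k" and sw: "sorted_wrt (<) a" using a unfolding Pposet_def by auto
      have "T \<subseteq> {2..n-k}"
      proof
        fix t assume "t \<in> T"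
        then obtain i where i: "i < length (tl a)" "t = tl a ! i" using a in_set_conv_nth by metis
        then have "t = a ! Suc i" by (simp add: nth_tl)
        moreover have "a!0 < a!Suc i" using sw i by (simp add: sorted_wrt_iff_nth_less)
        moreover have "a!Suc i \<le> n - k" using a i len unfolding Pmem by auto
        ultimately show "t \<in> {2..n-k}" using a by auto
      qed
      moreover have "card T = k - 1" using a(2) len sw
        by (simp add: distinct_card strict_sorted_iff distinct_tl)
      ultimately show "T \<in> ?Y" by auto
    qed
    show "(\<lambda>T. 1 # sorted_list_of_set T) ` ?Y \<subseteq> ?X"
    proof
      fix l assume "l \<in> (\<lambda>T. 1 # sorted_list_of_set T) ` ?Y"
      then obtain T where T: "T \<subseteq> {2..n-k}" "card T = k - 1" "l = 1 # sorted_list_of_set T" by auto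
      have fin: "finite T" using T(1) finite_subset by blast
      have "length l = k" using T k by simp
      moreover have "sorted_wrt (<) l" using T fin by auto
      moreover have "\<forall>x\<in>set l. 1 \<le> x \<and> x \<le> n - k" using T fin n k by auto
      ultimately show "l \<in> ?X" using T unfolding Pposet_def by auto
    qed
  qed
  then have "card ?X = card ?Y" by (rule bij_betw_same_card)
  also have "\<dots> = card {2..n-k} choose (k - 1)" by (rule n_subsets) simp
  also have "card {2..n-k} = n - k - 1" by simp
  finally show ?thesis .
qed

lemma leqP_trans: "leq_P x y \<Longrightarrow> leq_P y z \<Longrightarrow> leq_P x z"
  unfolding leqP_nth by (metis le_trans)

lemma P_main:
  assumes A: "A \<subseteq> Pposet k n" and G: "Gvec k n \<in> A" and k: "k \<ge> 1" and n: "n \<ge> 2*k"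
  shows "card (P_ideal k n A - P_ideal k n (P_shift A)) = card {y \<in> Pposet k n. y!0 = 1}"
proof -
  let ?P = "Pposet k n"
  define PA where "PA = P_ideal k n A"
  have PAP: "PA \<subseteq> ?P" unfolding PA_def P_ideal_def by auto
  have finPA: "finite PA" using PAP P_fin finite_subset by blast
  have D: "P_ideal k n A - P_ideal k n (P_shift A) = {x \<in> PA. map Suc x \<notin> PA}"
    using shift_iff[OF A _ k] PAP unfolding PA_def by blast
  define E where "E = {x \<in> PA. map Suc x \<in> PA}"
  have H1: "{y \<in> PA. y!0 = 1} = {y \<in> ?P. y!0 = 1}"
    using hd1_le_G[OF _ _ k n] G PAP unfolding PA_def P_ideal_def by auto
  define H2 where "H2 = {y \<in> PA. y!0 \<noteq> 1}"
  have bij: "bij_betw (map Suc) E H2"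
  proof (rule bij_betw_byWitness[where f' = "map (\<lambda>t. t - 1)"])
    show "\<forall>a\<in>E. map (\<lambda>t. t - 1) (map Suc a) = a" by (simp add: map_idI)
    show "map Suc ` E \<subseteq> H2"
    proof
      fix y assume "y \<in> map Suc ` E"
      then obtain x where x: "x \<in> E" "y = map Suc x" by auto
      have "x \<in> ?P" using x PAP unfolding E_def by auto
      then have "1 \<le> x!0" "length x = k" using k unfolding Pmem by auto
      then show "y \<in> H2" using x k unfolding E_def H2_def by auto
    qed
    show "\<forall>y\<in>H2. map Suc (map (\<lambda>t. t - 1) y) = y"
    proof
      fix y assume y: "y \<in> H2"
      then have yP: "y \<in> ?P" using PAP unfolding H2_def by auto
      then have ge: "1 \<le> y!i" if "i < length y" for i using that unfolding Pmem by auto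
      have "Suc (y!i - 1) = y!i" if "i < length y" for i using ge[OF that] by arith
      then show "map Suc (map (\<lambda>t. t - 1) y) = y" by (intro nth_equalityI) simp_all
    qed
    show "map (\<lambda>t. t - 1) ` H2 \<subseteq> E"
    proof
      fix x assume "x \<in> map (\<lambda>t. t - 1) ` H2"
      then obtain y where y: "y \<in> H2" "x = map (\<lambda>t. t - 1) y" by auto
      have yP: "y \<in> ?P" using y PAP unfolding H2_def by auto
      have len: "length y = k" using yP unfolding Pmem by auto
      have y0: "2 \<le> y!0" using yP y k unfolding Pmem H2_def by fastforce
      have ge2: "2 \<le> y!i" if "i < k" for i
      proof (cases "i = 0")
        case True then show ?thesis using y0 by simp
      next
        case False then show ?thesis using yP that y0 unfolding Pmem
          by (metis le_less_trans less_imp_le_nat not_gr0 order.strict_trans2)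
      qed
      have c1: "y!i - 1 < y!j - 1" if "i < j" "j < k" for i j
        using yP that ge2[of i] unfolding Pmem by (metis diff_less_mono less_trans order.strict_trans2 one_le_numeral)
      have c2: "1 \<le> y!i - 1 \<and> y!i - 1 \<le> n - k" if "i < k" for i
        using yP that ge2[of i] unfolding Pmem by (auto simp: le_diff_conv2)
      have xP: "x \<in> ?P" using len c1 c2 y(2) unfolding Pmem by auto
      have "leq_P x y" using y(2) unfolding leqP_nth by auto
      moreover obtain a where "a \<in> A" "leq_P y a" using y unfolding H2_def PA_def P_ideal_def by auto
      ultimately have "x \<in> PA" using xP leqP_trans unfolding PA_def P_ideal_def by blast
      moreover have "map Suc x = y"
      proof -
        have "Suc (y!i - 1) = y!i" if "i < length y" for i using ge2[of i] that len by arith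
        then show ?thesis using y(2) by (intro nth_equalityI) simp_all
      qed
      ultimately show "x \<in> E" using y unfolding E_def H2_def by auto
    qed
  qed
  have "card PA = card {x \<in> PA. map Suc x \<notin> PA} + card E"
    unfolding E_def using finPA by (subst card_Un_disjoint[symmetric]) (auto intro: arg_cong[where f=card])
  moreover have "card PA = card {y \<in> PA. y!0 = 1} + card H2"
    unfolding H2_def using finPA by (subst card_Un_disjoint[symmetric]) (auto intro: arg_cong[where f=card])
  moreover have "card E = card H2" using bij by (rule bij_betw_same_card)
  ultimately show ?thesis using D H1 unfolding PA_def by simp
qed

fun Lf :: "nat \<Rightarrow> nat list \<Rightarrow> nat list" where
  "Lf d [] = []"
| "Lf d (a # xs) = (a + d) # (a + d + 1) # Lf (Suc d) xs"

definition R :: "nat list \<Rightarrow> nat set" where "R x = set (Lf 0 x)"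

lemma Lf_len: "length (Lf d x) = 2 * length x"
  by (induction d x rule: Lf.induct) auto

lemma UN_Suc_split: "(\<Union>j<Suc m. f j) = f 0 \<union> (\<Union>j<m. f (Suc j))"
  by (auto simp: less_Suc_eq_0_disj)

lemma Lf_set: "set (Lf d x) = (\<Union>j<length x. {x!j + d + j, x!j + d + j + 1})"
proof (induction d x rule: Lf.induct)
  case (1 d) then show ?case by simp
next
  case (2 d a xs)
  have "(\<Union>j<length (a # xs). {(a # xs)!j + d + j, (a # xs)!j + d + j + 1})
      = {a + d, a + d + 1} \<union> (\<Union>j<length xs. {xs!j + Suc d + j, xs!j + Suc d + j + 1})"
    by (simp add: UN_Suc_split)
  then show ?case using 2 by simp
qed

lemma Lf_sorted: "sorted_wrt (<) x \<Longrightarrow> sorted_wrt (<) (Lf d x)"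
proof (induction d x rule: Lf.induct)
  case (1 d) then show ?case by simp
next
  case (2 d a xs)
  have "\<forall>t \<in> set (Lf (Suc d) xs). a + d + 1 < t"
  proof
    fix t assume "t \<in> set (Lf (Suc d) xs)"
    then obtain j where "j < length xs" "t = xs!j + Suc d + j \<or> t = xs!j + Suc d + j + 1"
      unfolding Lf_set by auto
    moreover have "a < xs!j" if "j < length xs" for j using 2(2) that by simp
    ultimately show "a + d + 1 < t" by fastforce
  qed
  then show ?case using 2 by auto
qed

lemma Lf_le: "length x = length y \<Longrightarrow> list_all2 (\<le>) (Lf d x) (Lf d y) \<longleftrightarrow> list_all2 (\<le>) x y"
proof (induction d x arbitrary: y rule: Lf.induct)
  case (1 d) then show ?case by simp
next
  case (2 d a xs)
  then obtain b ys where "y = b # ys" by (cases y) auto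
  then show ?case using 2 by auto
qed

lemma Lf_map: "\<forall>t\<in>set x. 1 \<le> t \<Longrightarrow> map (\<lambda>t. t - 1) (Lf d x) = Lf d (map (\<lambda>t. t - 1) x)"
  by (induction d x rule: Lf.induct) auto

lemma Lf_hd: "x \<noteq> [] \<Longrightarrow> hd (Lf d x) = hd x + d"
  by (cases x) auto

lemma sorted_Min: "sorted_wrt (<) l \<Longrightarrow> l \<noteq> [] \<Longrightarrow> Min (set l) = hd l"
  by (cases l) (auto intro!: Min_eqI)

lemma P_sorted: "x \<in> Pposet k n \<Longrightarrow> sorted_wrt (<) x"
  unfolding Pposet_def by auto

lemma R_sls: "x \<in> Pposet k n \<Longrightarrow> sorted_list_of_set (R x) = Lf 0 x"
  unfolding R_def by (rule sls_set) (rule Lf_sorted[OF P_sorted])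

lemma R_card: "x \<in> Pposet k n \<Longrightarrow> card (R x) = 2 * k"
proof -
  assume x: "x \<in> Pposet k n"
  have "distinct (Lf 0 x)" using Lf_sorted[OF P_sorted[OF x]] strict_sorted_iff by blast
  then show ?thesis unfolding R_def using x by (simp add: distinct_card Lf_len Pposet_def)
qed

lemma R_leq: "x \<in> Pposet k n \<Longrightarrow> y \<in> Pposet k n \<Longrightarrow> leq_p (R x) (R y) \<longleftrightarrow> leq_P x y"
proof -
  assume x: "x \<in> Pposet k n" and y: "y \<in> Pposet k n"
  have len: "length x = k" "length y = k" using x y unfolding Pposet_def by auto
  have "leq_p (R x) (R y) \<longleftrightarrow> list_all2 (\<le>) (Lf 0 x) (Lf 0 y)"
    unfolding leq_p_def R_card[OF x] R_card[OF y] R_sls[OF x] R_sls[OF y] list_all2_conv_all_nth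
    using len by (simp add: Lf_len)
  also have "\<dots> \<longleftrightarrow> leq_P x y" unfolding leq_P_def using len by (simp add: Lf_le)
  finally show ?thesis .
qed

lemma R_inj: "inj_on R (Pposet k n)"
proof (rule inj_onI)
  fix x y assume x: "x \<in> Pposet k n" and y: "y \<in> Pposet k n" and e: "R x = R y"
  have "leq_P x y" "leq_P y x" using R_leq[OF x y] R_leq[OF y x] e leq_p_def by auto
  then show "x = y" unfolding leqP_nth by (metis nth_equalityI le_antisym)
qed

lemma step_gap:
  fixes i :: "nat \<Rightarrow> nat" and j j' k :: nat
  assumes "\<forall>j. j + 1 < k \<longrightarrow> i j + 2 \<le> i (j + 1)"
  shows "j \<le> j' \<Longrightarrow> j' < k \<Longrightarrow> i j + 2 * (j' - j) \<le> i j'"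
proof (induction j')
  case 0 then show ?case by simp
next
  case (Suc j')
  show ?case
  proof (cases "j = Suc j'")
    case True then show ?thesis by simp
  next
    case False
    then have "j \<le> j'" using Suc by simp
    then have "i j + 2 * (j' - j) \<le> i j'" using Suc by simp
    moreover have "i j' + 2 \<le> i (Suc j')" using assms Suc.prems by auto
    ultimately show ?thesis using \<open>j \<le> j'\<close> by (simp add: Suc_diff_le)
  qed
qed

lemma R_Ffam: assumes k: "k \<ge> 1" shows "R ` Pposet k n = Ffam k n"
proof
  show "R ` Pposet k n \<subseteq> Ffam k n"
  proof
    fix X assume "X \<in> R ` Pposet k n"
    then obtain x where x: "x \<in> Pposet k n" "X = R x" by auto
    have len: "length x = k" and sw: "sorted_wrt (<) x" using x unfolding Pposet_def by auto
    define i where "i = (\<lambda>j. x!j + j)"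
    have "X = (\<Union>j<k. {i j, i j + 1})" using x len unfolding R_def Lf_set i_def by simp
    moreover have "1 \<le> i j \<and> i j \<le> n - 1" if j: "j < k" for j
    proof -
      have "x!j + (k - 1 - j) \<le> x!(k-1)" using sorted_gap[OF sw, of j "k-1"] j len by simp
      moreover have "x!(k-1) \<le> n - k" "1 \<le> x!j" using x k j unfolding Pmem by auto
      ultimately show ?thesis unfolding i_def using j by linarith
    qed
    moreover have "i j + 2 \<le> i (j + 1)" if "j + 1 < k" for j
      using x that unfolding Pmem i_def by fastforce
    ultimately show "X \<in> Ffam k n" unfolding Ffam_def by blast
  qed
next
  show "Ffam k n \<subseteq> R ` Pposet k n"
  proof
    fix X assume "X \<in> Ffam k n"
    then obtain i where X: "X = (\<Union>j<k. {i j, i j + 1})"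
      and b: "\<forall>j<k. 1 \<le> i j \<and> i j \<le> n - 1" and g: "\<forall>j. j + 1 < k \<longrightarrow> i j + 2 \<le> i (j + 1)"
      unfolding Ffam_def by blast
    note sg = step_gap[OF g]
    define x where "x = map (\<lambda>j. i j - j) [0..<k]"
    have ij: "j \<le> i j" if "j < k" for j using sg[of 0 j] b that by auto
    have l1: "length x = k" unfolding x_def by simp
    have l2: "x!a < x!b'" if "a < b'" "b' < k" for a b'
      using that sg[of a b'] ij[of a] unfolding x_def by auto
    have l3: "1 \<le> x!j \<and> x!j \<le> n - k" if j: "j < k" for j
    proof -
      have "i j + 2 * (k - 1 - j) \<le> i (k - 1)" using sg[of j "k-1"] j by simp
      moreover have "i (k-1) \<le> n - 1" "1 \<le> i 0" using b k by auto
      moreover have "i 0 + 2 * j \<le> i j" using sg[of 0 j] j by simp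
      ultimately show "1 \<le> x!j \<and> x!j \<le> n - k" unfolding x_def using j by auto
    qed
    have "x \<in> Pposet k n" unfolding Pmem using l1 l2 l3 by blast
    moreover have "R x = X" unfolding R_def Lf_set X x_def using ij by auto
    ultimately show "X \<in> R ` Pposet k n" by blast
  qed
qed




lemma F_ideal_R: assumes k: "k \<ge> 1" and B: "B \<subseteq> Pposet k n"
  shows "F_ideal k n (R ` B) = R ` P_ideal k n B"
proof -
  have "F_ideal k n (R ` B) = {X \<in> R ` Pposet k n. \<exists>b\<in>B. leq_p X (R b)}"
    unfolding F_ideal_def R_Ffam[OF k] by auto
  also have "\<dots> = R ` {x \<in> Pposet k n. \<exists>b\<in>B. leq_p (R x) (R b)}" by auto
  also have "\<dots> = R ` P_ideal k n B" unfolding P_ideal_def using R_leq B by blast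
  finally show ?thesis .
qed

lemma shiftP: assumes a: "a \<in> Pposet k n" and h: "hd a > 1" and k: "k \<ge> 1"
  shows "map (\<lambda>t. t - 1) a \<in> Pposet k n"
proof -
  have len: "length a = k" using a unfolding Pmem by auto
  have y0: "2 \<le> a!0" using h len k by (cases a) auto
  have ge2: "2 \<le> a!i" if "i < k" for i
  proof (cases "i = 0")
    case True then show ?thesis using y0 by simp
  next
    case False then show ?thesis using a that y0 unfolding Pmem
      by (metis le_less_trans less_imp_le_nat not_gr0 order.strict_trans2)
  qed
  have c1: "a!i - 1 < a!j - 1" if "i < j" "j < k" for i j
    using a that ge2[of i] unfolding Pmem by (metis diff_less_mono less_trans order.strict_trans2 one_le_numeral)
  have c2: "1 \<le> a!i - 1 \<and> a!i - 1 \<le> n - k" if "i < k" for i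
    using a that ge2[of i] unfolding Pmem by (auto simp: le_diff_conv2)
  show ?thesis using len c1 c2 unfolding Pmem by auto
qed

lemma P_shift_P: "k \<ge> 1 \<Longrightarrow> A \<subseteq> Pposet k n \<Longrightarrow> P_shift A \<subseteq> Pposet k n"
  unfolding P_shift_def using shiftP by blast

lemma R_min: "k \<ge> 1 \<Longrightarrow> a \<in> Pposet k n \<Longrightarrow> Min (R a) = hd a"
proof -
  assume k: "k \<ge> 1" and a: "a \<in> Pposet k n"
  have ne: "a \<noteq> []" using a k unfolding Pposet_def by auto
  then have "Lf 0 a \<noteq> []" by (cases a) auto
  then show ?thesis unfolding R_def using sorted_Min[OF Lf_sorted[OF P_sorted[OF a]]] Lf_hd[OF ne] by simp
qed

lemma R_map: "a \<in> Pposet k n \<Longrightarrow> (\<lambda>t. t - 1) ` R a = R (map (\<lambda>t. t - 1) a)"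
  unfolding R_def using Lf_map[of a 0] unfolding Pposet_def by (metis (no_types, lifting) list.set_map mem_Collect_eq)

lemma F_shift_R: assumes k: "k \<ge> 1" and A: "A \<subseteq> Pposet k n"
  shows "F_shift (R ` A) = R ` P_shift A"
proof
  show "F_shift (R ` A) \<subseteq> R ` P_shift A"
  proof
    fix X assume "X \<in> F_shift (R ` A)"
    then obtain a where a: "a \<in> A" "Min (R a) > 1" "X = (\<lambda>t. t - 1) ` R a"
      unfolding F_shift_def by blast
    have aP: "a \<in> Pposet k n" using a A by blast
    have ne: "a \<noteq> []" using aP k unfolding Pposet_def by auto
    have "X = R (map (\<lambda>t. t - 1) a)" using a(3) R_map[OF aP] by simp
    moreover have "map (\<lambda>t. t - 1) a \<in> P_shift A"
      unfolding P_shift_def using a R_min[OF k aP] ne by auto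
    ultimately show "X \<in> R ` P_shift A" by blast
  qed
next
  show "R ` P_shift A \<subseteq> F_shift (R ` A)"
  proof
    fix X assume "X \<in> R ` P_shift A"
    then obtain a where a: "a \<in> A" "hd a > 1" "X = R (map (\<lambda>t. t - 1) a)"
      unfolding P_shift_def by blast
    have aP: "a \<in> Pposet k n" using a A by blast
    have "X = (\<lambda>t. t - 1) ` R a" using a(3) R_map[OF aP] by simp
    moreover have "Min (R a) > 1" using a R_min[OF k aP] by simp
    ultimately show "X \<in> F_shift (R ` A)" unfolding F_shift_def using a(1) by blast
  qed
qed

lemma facets_gen: assumes "\<forall>A\<in>G. finite A \<and> card A = c"
  shows "facets (gen_complex G) = G"
proof
  show "facets (gen_complex G) \<subseteq> G"
  proof
    fix s assume "s \<in> facets (gen_complex G)"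
    then obtain A where "A \<in> G" "s \<subseteq> A" "\<forall>t\<in>gen_complex G. s \<subseteq> t \<longrightarrow> t = s"
      unfolding facets_def gen_complex_def by auto
    moreover then have "A \<in> gen_complex G" unfolding gen_complex_def by auto
    ultimately show "s \<in> G" by auto
  qed
  show "G \<subseteq> facets (gen_complex G)"
  proof
    fix A assume A: "A \<in> G"
    have "t = A" if t1: "t \<in> gen_complex G" and t2: "A \<subseteq> t" for t
    proof -
      obtain B where "B \<in> G" "t \<subseteq> B" using t1 unfolding gen_complex_def by blast
      then have "A = B" using A assms t2 by (metis card_subset_eq subset_trans)
      then show ?thesis using t2 \<open>t \<subseteq> B\<close> by auto
    qed
    moreover have "A \<in> gen_complex G" using A unfolding gen_complex_def by auto
    ultimately show "A \<in> facets (gen_complex G)" unfolding facets_def by auto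
  qed
qed

lemma Lf_upt: "set (Lf d [c..<c + r]) = {c + d..<c + d + 2 * r}"
proof (induction r arbitrary: c d)
  case 0 then show ?case by simp
next
  case (Suc r)
  have e: "[c..<c + Suc r] = c # [Suc c..<Suc c + r]" by (subst upt_rec) (simp del: upt_Suc)
  have IH: "set (Lf (Suc d) [Suc c..<Suc c + r]) = {Suc c + Suc d..<Suc c + Suc d + 2*r}"
    by (rule Suc.IH)
  have "set (Lf d [c..<c + Suc r]) = insert (c + d) (insert (c + d + 1) {Suc c + Suc d..<Suc c + Suc d + 2*r})"
    unfolding e by (simp only: Lf.simps list.set IH)
  also have "\<dots> = {c + d..<c + d + 2 * Suc r}"
  proof (rule set_eqI)
    fix t show "t \<in> insert (c + d) (insert (c + d + 1) {Suc c + Suc d..<Suc c + Suc d + 2*r}) \<longleftrightarrow> t \<in> {c + d..<c + d + 2 * Suc r}"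
      by (simp only: insert_iff atLeastLessThan_iff) presburger
  qed
  finally show ?case .
qed

lemma R_G: assumes n: "n \<ge> 2*k" and k: "k \<ge> 1"
  shows "R (Gvec k n) = {1, 2} \<union> {n - 2*k + 3 .. n}"
proof -
  have "R (Gvec k n) = {1, 2} \<union> set (Lf 1 [n-2*k+2 ..< (n-2*k+2)+(k-1)])"
    unfolding R_def Gvec_eq[OF n k] Lf.simps by (simp add: numeral_2_eq_2 del: upt_Suc)
  also have "set (Lf 1 [n-2*k+2 ..< (n-2*k+2)+(k-1)]) = {n-2*k+2+1 ..< n-2*k+2+1+2*(k-1)}"
    by (rule Lf_upt)
  also have "n-2*k+2+1+2*(k-1) = Suc n" using n k by arith
  also have "n-2*k+2+1 = n-2*k+3" by simp
  finally show ?thesis by (simp only: atLeastLessThanSuc_atLeastAtMost)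
qed

lemma Ffam_card: assumes k: "k \<ge> 1" and X: "X \<in> Ffam k n" shows "finite X \<and> card X = 2 * k"
proof -
  obtain x where x: "x \<in> Pposet k n" "X = R x" using R_Ffam[OF k, of n] X by blast
  then show ?thesis using R_card[OF x(1)] unfolding R_def by simp
qed

lemma F_ideal_sub: "F_ideal k n S \<subseteq> Ffam k n"
  unfolding F_ideal_def by auto

theorem lemma3p13:
  fixes k n :: nat
  assumes "k \<ge> 1" and "n \<ge> 2 * k"
  shows "(\<forall>S. F_antichain k n S \<and> {1, 2} \<union> {n - 2*k + 3 .. n} \<in> S \<longrightarrow>
            card (facets (B_sub k n S)) = (n - k - 1) choose (k - 1))
       \<and> (\<forall>A. P_antichain k n A \<and> Gvec k n \<in> A \<longrightarrow>
            card (P_ideal k n A - P_ideal k n (P_shift A)) = card (P_ideal k n {Gvec k n})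
          \<and> card (P_ideal k n {Gvec k n}) = (n - k - 1) choose (k - 1))"
proof
  note k = assms(1) and n = assms(2)
  show "\<forall>A. P_antichain k n A \<and> Gvec k n \<in> A \<longrightarrow>
            card (P_ideal k n A - P_ideal k n (P_shift A)) = card (P_ideal k n {Gvec k n})
          \<and> card (P_ideal k n {Gvec k n}) = (n - k - 1) choose (k - 1)"
  proof (intro allI impI)
    fix A assume H: "P_antichain k n A \<and> Gvec k n \<in> A"
    then have AP: "A \<subseteq> Pposet k n" and GA: "Gvec k n \<in> A" unfolding P_antichain_def by blast+
    have e1: "card (P_ideal k n A - P_ideal k n (P_shift A)) = card {y \<in> Pposet k n. y!0 = 1}"
      by (rule P_main[OF AP GA k n])
    show "card (P_ideal k n A - P_ideal k n (P_shift A)) = card (P_ideal k n {Gvec k n})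
          \<and> card (P_ideal k n {Gvec k n}) = (n - k - 1) choose (k - 1)"
      unfolding e1 G_ideal[OF k n] card_hd1[OF k n] by (rule conjI) (rule refl)+
  qed
  show "\<forall>S. F_antichain k n S \<and> {1, 2} \<union> {n - 2*k + 3 .. n} \<in> S \<longrightarrow>
            card (facets (B_sub k n S)) = (n - k - 1) choose (k - 1)"
  proof (intro allI impI)
    fix S assume S: "F_antichain k n S \<and> {1, 2} \<union> {n - 2*k + 3 .. n} \<in> S"
    have SF: "S \<subseteq> Ffam k n" and TS: "{1, 2} \<union> {n - 2*k + 3 .. n} \<in> S"
      using S unfolding F_antichain_def by blast+
    define A where "A = {x \<in> Pposet k n. R x \<in> S}"
    have AP: "A \<subseteq> Pposet k n" unfolding A_def by blast
    have SA: "S = R ` A"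
    proof
      show "S \<subseteq> R ` A"
      proof
        fix X assume X: "X \<in> S"
        then have "X \<in> R ` Pposet k n" using SF R_Ffam[OF k, of n] by blast
        then obtain x where "x \<in> Pposet k n" "X = R x" by blast
        then show "X \<in> R ` A" using X unfolding A_def by blast
      qed
      show "R ` A \<subseteq> S" unfolding A_def by blast
    qed
    have GA: "Gvec k n \<in> A" using TS R_G[OF n k] Gvec_P[OF n k] unfolding A_def by simp
    have cardF: "\<forall>X\<in>F_ideal k n T. finite X \<and> card X = 2 * k" for T
      using Ffam_card[OF k] F_ideal_sub by blast
    have fB: "facets (B_cx k n T) = F_ideal k n T" for T
      unfolding B_cx_def by (rule facets_gen[OF cardF])
    have eqD: "{X \<in> facets (B_cx k n S). X \<notin> facets (B_cx k n (F_shift S))}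
             = F_ideal k n S - F_ideal k n (F_shift S)"
      unfolding fB by blast
    have Bs: "B_sub k n S = gen_complex (F_ideal k n S - F_ideal k n (F_shift S))"
      unfolding B_sub_def eqD ..
    have cardD: "\<forall>X\<in>F_ideal k n S - F_ideal k n (F_shift S). finite X \<and> card X = 2 * k"
      using cardF by blast
    have "facets (B_sub k n S) = F_ideal k n S - F_ideal k n (F_shift S)"
      unfolding Bs by (rule facets_gen[OF cardD])
    also have "\<dots> = R ` P_ideal k n A - R ` P_ideal k n (P_shift A)"
      unfolding SA F_shift_R[OF k AP] F_ideal_R[OF k AP] F_ideal_R[OF k P_shift_P[OF k AP]] ..
    also have "\<dots> = R ` (P_ideal k n A - P_ideal k n (P_shift A))"
    proof (rule sym, rule inj_on_image_set_diff[OF R_inj])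
      show "P_ideal k n A - P_ideal k n (P_shift A) \<subseteq> Pposet k n" unfolding P_ideal_def by blast
      show "P_ideal k n (P_shift A) \<subseteq> Pposet k n" unfolding P_ideal_def by blast
    qed
    finally have e: "facets (B_sub k n S) = R ` (P_ideal k n A - P_ideal k n (P_shift A))" .
    have inj: "inj_on R (P_ideal k n A - P_ideal k n (P_shift A))"
      by (rule inj_on_subset[OF R_inj]) (unfold P_ideal_def, blast)
    have "card (facets (B_sub k n S)) = card (P_ideal k n A - P_ideal k n (P_shift A))"
      unfolding e by (rule card_image[OF inj])
    also have "\<dots> = (n - k - 1) choose (k - 1)"
      unfolding P_main[OF AP GA k n] card_hd1[OF k n] ..
    finally show "card (facets (B_sub k n S)) = (n - k - 1) choose (k - 1)" .
  qed
qed

end
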